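(* Let $V:\mathbb{R}\to\mathbb{R}$ be convex with $m:=e^{-V}$ a probability density. Let $0<c<C$ and $f\in\mathcal{P}_{c,C}$. Then there exists a constant $A=A(c,C,V)$ depending only on $c$, $C$ and $V$ such that the optimal transport map $T$ from $m$ to $f$ satisfies $|T(x)-x|\le A$ for all $x\in\mathbb{R}$.
   Context: $\mathcal{P}_{c,C}:=\{g\in\mathcal{P}(\mathbb{R}):\ c\,m\le g\le C\,m\}$. The optimal transport map (for quadratic cost) from $m$ to $f$ on $\mathbb{R}$ is the monotone map $T=F_f^{-1}\circ F_m$, where $F_m,F_f$ are the cumulative distribution functions. *)

theory Defs
  imports "HOL-Analysis.Analysis"
begin

definition prob_density :: "(real \<Rightarrow> real) \<Rightarrow> bool" where
  "prob_density g \<longleftrightarrow> g \<in> borel_measurable lborel \<and> (\<forall>x. 0 \<le> g x)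
     \<and> integrable lborel g \<and> integral\<^sup>L lborel g = 1"

definition P_cC :: "real \<Rightarrow> real \<Rightarrow> (real \<Rightarrow> real) \<Rightarrow> (real \<Rightarrow> real) set" where
  "P_cC c C m = {g. prob_density g \<and> (\<forall>x. c * m x \<le> g x \<and> g x \<le> C * m x)}"

definition cdf :: "(real \<Rightarrow> real) \<Rightarrow> real \<Rightarrow> real" where
  "cdf g x = (LINT t:{..x}|lborel. g t)"

definition quantile :: "(real \<Rightarrow> real) \<Rightarrow> real \<Rightarrow> real" where
  "quantile g p = Inf {y. p \<le> cdf g y}"

text \<open>Monotone optimal transport map from m to f: T = F_f^{-1} o F_m.\<close>
definition ot_map :: "(real \<Rightarrow> real) \<Rightarrow> (real \<Rightarrow> real) \<Rightarrow> real \<Rightarrow> real" where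
  "ot_map m f = quantile f \<circ> cdf m"

end

theory Submission
  imports Defs
begin

definition Fm :: "(real \<Rightarrow> real) \<Rightarrow> real \<Rightarrow> real" where
  "Fm g y = integral\<^sup>L lborel (\<lambda>t. indicator {..y} t * g t)"
definition Gm :: "(real \<Rightarrow> real) \<Rightarrow> real \<Rightarrow> real" where
  "Gm g y = integral\<^sup>L lborel (\<lambda>t. indicator {y<..} t * g t)"

lemma cdf_Fm: "cdf g y = Fm g y"
  by (simp add: cdf_def Fm_def set_lebesgue_integral_def)

lemma ind_int:
  fixes g :: "real \<Rightarrow> real"
  assumes "integrable lborel g" "A \<in> sets borel"
  shows "integrable lborel (\<lambda>t. indicator A t * g t)"
  using integrable_mult_indicator[of A lborel g] assms by simp

lemma F_mono:
  fixes g :: "real \<Rightarrow> real"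
  assumes "integrable lborel g" "\<And>t. 0 \<le> g t" "y \<le> w"
  shows "Fm g y \<le> Fm g w"
  unfolding Fm_def
  by (rule integral_mono[OF ind_int ind_int]) (use assms in \<open>auto split: split_indicator\<close>)

lemma G_anti:
  fixes g :: "real \<Rightarrow> real"
  assumes "integrable lborel g" "\<And>t. 0 \<le> g t" "y \<le> w"
  shows "Gm g w \<le> Gm g y"
  unfolding Gm_def
  by (rule integral_mono[OF ind_int ind_int]) (use assms in \<open>auto split: split_indicator\<close>)

lemma FG_sum:
  fixes g :: "real \<Rightarrow> real"
  assumes "integrable lborel g"
  shows "Fm g y + Gm g y = integral\<^sup>L lborel g"
proof -
  have i1: "integrable lborel (\<lambda>t. indicator {..y} t * g t)" by (rule ind_int) (use assms in auto)
  have i2: "integrable lborel (\<lambda>t. indicator {y<..} t * g t)" by (rule ind_int) (use assms in auto)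
  have "Fm g y + Gm g y = integral\<^sup>L lborel (\<lambda>t. indicator {..y} t * g t + indicator {y<..} t * g t)"
    unfolding Fm_def Gm_def using Bochner_Integration.integral_add[OF i1 i2] by simp
  also have "(\<lambda>t. indicator {..y} t * g t + indicator {y<..} t * g t) = g"
    by (auto split: split_indicator)
  finally show ?thesis .
qed

lemma sub_le_total:
  fixes g :: "real \<Rightarrow> real"
  assumes "integrable lborel g" "\<And>t. 0 \<le> g t" "A \<in> sets borel"
  shows "integral\<^sup>L lborel (\<lambda>t. indicator A t * g t) \<le> integral\<^sup>L lborel g"
  by (rule integral_mono[OF ind_int]) (use assms in \<open>auto split: split_indicator\<close>)

lemma Icc_lower:
  fixes g :: "real \<Rightarrow> real"
  assumes "integrable lborel g" "a \<le> b" "\<And>t. t \<in> {a..b} \<Longrightarrow> B \<le> g t"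
  shows "(b - a) * B \<le> integral\<^sup>L lborel (\<lambda>t. indicator {a..b} t * g t)"
proof -
  have "integral\<^sup>L lborel (\<lambda>t. indicator {a..b} t * B) = (b - a) * B"
    using assms(2) by simp
  moreover have "integral\<^sup>L lborel (\<lambda>t. indicator {a..b} t * B) \<le> integral\<^sup>L lborel (\<lambda>t. indicator {a..b} t * g t)"
    by (rule integral_mono) (use assms in \<open>auto intro!: ind_int split: split_indicator\<close>)
  ultimately show ?thesis using assms(2) by simp
qed

lemma incr:
  fixes V :: "real \<Rightarrow> real"
  assumes cv: "convex_on UNIV V" and "t \<le> y" "0 \<le> s"
  shows "V (t + s) + V y \<le> V t + V (y + s)"
proof (cases "y + s - t = 0")
  case True
  then have "s = 0" "t = y" using assms by auto
  then show ?thesis by simp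
next
  case False
  define D where "D = y + s - t"
  have D: "D > 0" using False assms unfolding D_def by auto
  define l where "l = s / D"
  define u where "u = (y - t) / D"
  have l: "0 \<le> l" "l \<le> 1" using D assms unfolding l_def D_def by (auto simp: field_simps)
  have u: "0 \<le> u" "u \<le> 1" using D assms unfolding u_def D_def by (auto simp: field_simps)
  have "l + u = (s + (y - t)) / D" by (simp add: l_def u_def add_divide_distrib)
  also have "\<dots> = 1" using D by (simp add: D_def)
  finally have lu: "l + u = 1" .
  have e1: "(1 - l) *\<^sub>R t + l *\<^sub>R (y + s) = t + s"
  proof -
    have "(1 - l) *\<^sub>R t + l *\<^sub>R (y + s) = t + l * D" by (simp add: D_def algebra_simps)
    also have "l * D = s" using D by (simp add: l_def)
    finally show ?thesis .
  qed
  have e2: "(1 - u) *\<^sub>R t + u *\<^sub>R (y + s) = y"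
  proof -
    have "(1 - u) *\<^sub>R t + u *\<^sub>R (y + s) = t + u * D" by (simp add: D_def algebra_simps)
    also have "u * D = y - t" using D by (simp add: u_def)
    finally show ?thesis by simp
  qed
  have 1: "V (t + s) \<le> (1 - l) * V t + l * V (y + s)"
    using convex_onD[OF cv, of l t "y + s"] l e1 by simp
  have 2: "V y \<le> (1 - u) * V t + u * V (y + s)"
    using convex_onD[OF cv, of u t "y + s"] u e2 by simp
  have "(1 - l) * V t + l * V (y + s) + ((1 - u) * V t + u * V (y + s)) = V t + V (y + s)"
  proof -
    have "(1 - l) * V t + l * V (y + s) + ((1 - u) * V t + u * V (y + s)) = (2 - (l + u)) * V t + (l + u) * V (y + s)"
      by (simp add: algebra_simps)
    then show ?thesis using lu by simp
  qed
  then show ?thesis using 1 2 by linarith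
qed

lemma shiftF:
  fixes V :: "real \<Rightarrow> real"
  assumes cv: "convex_on UNIV V" and int: "integrable lborel (\<lambda>x. exp (- V x))" and yw: "y \<le> w"
  shows "exp (V y - V w) * Fm (\<lambda>x. exp (- V x)) y \<le> Fm (\<lambda>x. exp (- V x)) w"
proof -
  define s where "s = w - y"
  let ?m = "\<lambda>x. exp (- V x)"
  have "Fm ?m w = integral\<^sup>L lborel (\<lambda>x. indicator {..w} (s + 1 * x) * ?m (s + 1 * x))"
    unfolding Fm_def using lborel_integral_real_affine[of 1 "\<lambda>x. indicator {..w} x * ?m x" s] by simp
  also have "\<dots> = integral\<^sup>L lborel (\<lambda>x. indicator {..y} x * ?m (s + x))"
    by (rule Bochner_Integration.integral_cong) (auto simp: s_def split: split_indicator)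
  finally have eq: "Fm ?m w = integral\<^sup>L lborel (\<lambda>x. indicator {..y} x * ?m (s + x))" .
  have i1: "integrable lborel (\<lambda>x. indicator {..w} x * ?m x)" by (rule ind_int) (use int in auto)
  have i2: "integrable lborel (\<lambda>x. indicator {..w} (s + 1 * x) * ?m (s + 1 * x))"
    using lborel_integrable_real_affine[OF i1, of 1 s] by simp
  have i3: "integrable lborel (\<lambda>x. indicator {..y} x * ?m (s + x))"
  proof -
    have "(\<lambda>x. indicator {..w} (s + 1 * x) * ?m (s + 1 * x)) = (\<lambda>x. indicator {..y} x * ?m (s + x))"
      by (auto simp: s_def fun_eq_iff split: split_indicator intro!: arg_cong[where f=V])
    then show ?thesis using i2 by simp
  qed
  have "exp (V y - V w) * Fm ?m y = integral\<^sup>L lborel (\<lambda>x. indicator {..y} x * (exp (V y - V w) * ?m x))"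
    unfolding Fm_def by (subst integral_mult_right_zero[symmetric]) (simp add: mult.left_commute)
  also have "\<dots> \<le> integral\<^sup>L lborel (\<lambda>x. indicator {..y} x * ?m (s + x))"
  proof (rule integral_mono[OF _ i3])
    show "integrable lborel (\<lambda>x. indicator {..y} x * (exp (V y - V w) * ?m x))"
    proof -
      have "integrable lborel (\<lambda>x. exp (V y - V w) * (indicator {..y} x * ?m x))"
        by (intro Bochner_Integration.integrable_mult_right ind_int int) auto
      then show ?thesis by (simp add: mult.left_commute)
    qed
    fix x
    show "indicator {..y} x * (exp (V y - V w) * ?m x) \<le> indicator {..y} x * ?m (s + x)"
    proof (cases "x \<le> y")
      case True
      have "V (x + s) + V y \<le> V x + V (y + s)" using incr[OF cv True, of s] yw s_def by simp
      then have "V y - V w + - V x \<le> - V (s + x)" using s_def by (simp add: add.commute)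
      then show ?thesis using True by (simp add: exp_add[symmetric])
    qed simp
  qed
  finally show ?thesis using eq by simp
qed

lemma shiftG:
  fixes V :: "real \<Rightarrow> real"
  assumes cv: "convex_on UNIV V" and int: "integrable lborel (\<lambda>x. exp (- V x))" and wx: "w \<le> x"
  shows "exp (V x - V w) * Gm (\<lambda>x. exp (- V x)) x \<le> Gm (\<lambda>x. exp (- V x)) w"
proof -
  define s where "s = x - w"
  let ?m = "\<lambda>x. exp (- V x)"
  have "Gm ?m w = integral\<^sup>L lborel (\<lambda>u. indicator {w<..} (- s + 1 * u) * ?m (- s + 1 * u))"
    unfolding Gm_def using lborel_integral_real_affine[of 1 "\<lambda>u. indicator {w<..} u * ?m u" "-s"] by simp
  also have "\<dots> = integral\<^sup>L lborel (\<lambda>u. indicator {x<..} u * ?m (u - s))"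
    by (rule Bochner_Integration.integral_cong) (auto simp: s_def split: split_indicator intro!: arg_cong[where f=V])
  finally have eq: "Gm ?m w = integral\<^sup>L lborel (\<lambda>u. indicator {x<..} u * ?m (u - s))" .
  have i1: "integrable lborel (\<lambda>u. indicator {w<..} u * ?m u)" by (rule ind_int) (use int in auto)
  have i2: "integrable lborel (\<lambda>u. indicator {w<..} (- s + 1 * u) * ?m (- s + 1 * u))"
    using lborel_integrable_real_affine[OF i1, of 1 "-s"] by simp
  have i3: "integrable lborel (\<lambda>u. indicator {x<..} u * ?m (u - s))"
  proof -
    have "(\<lambda>u. indicator {w<..} (- s + 1 * u) * ?m (- s + 1 * u)) = (\<lambda>u. indicator {x<..} u * ?m (u - s))"
      by (auto simp: s_def fun_eq_iff split: split_indicator intro!: arg_cong[where f=V])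
    then show ?thesis using i2 by simp
  qed
  have "exp (V x - V w) * Gm ?m x = integral\<^sup>L lborel (\<lambda>u. indicator {x<..} u * (exp (V x - V w) * ?m u))"
    unfolding Gm_def by (subst integral_mult_right_zero[symmetric]) (simp add: mult.left_commute)
  also have "\<dots> \<le> integral\<^sup>L lborel (\<lambda>u. indicator {x<..} u * ?m (u - s))"
  proof (rule integral_mono[OF _ i3])
    show "integrable lborel (\<lambda>u. indicator {x<..} u * (exp (V x - V w) * ?m u))"
    proof -
      have "integrable lborel (\<lambda>u. exp (V x - V w) * (indicator {x<..} u * ?m u))"
        by (intro Bochner_Integration.integrable_mult_right ind_int int) auto
      then show ?thesis by (simp add: mult.left_commute)
    qed
    fix u
    show "indicator {x<..} u * (exp (V x - V w) * ?m u) \<le> indicator {x<..} u * ?m (u - s)"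
    proof (cases "x < u")
      case True
      have "w \<le> u - s" using True s_def by simp
      have "V (w + s) + V (u - s) \<le> V w + V (u - s + s)" using incr[OF cv \<open>w \<le> u - s\<close>, of s] wx s_def by simp
      then have "V x - V w + - V u \<le> - V (u - s)" using s_def by simp
      then show ?thesis using True by (simp add: exp_add[symmetric])
    qed simp
  qed
  finally show ?thesis using eq by simp
qed

lemma sub_mono:
  fixes g :: "real \<Rightarrow> real"
  assumes "integrable lborel g" "\<And>t. 0 \<le> g t" "A \<in> sets borel" "B \<in> sets borel" "A \<subseteq> B"
  shows "integral\<^sup>L lborel (\<lambda>t. indicator A t * g t) \<le> integral\<^sup>L lborel (\<lambda>t. indicator B t * g t)"
  by (rule integral_mono[OF ind_int ind_int]) (use assms in \<open>auto split: split_indicator\<close>)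

lemma slope_mono:
  fixes V :: "real \<Rightarrow> real"
  assumes cv: "convex_on UNIV V" and "p < q" "q \<le> u" "u < v"
  shows "(V q - V p) / (q - p) \<le> (V v - V u) / (v - u)"
proof -
  have 1: "(V p - V q) / (p - q) \<le> (V p - V v) / (p - v)"
    using convex_on_slope_le(1)[OF cv, of p v q] assms by simp
  have 2: "(V p - V v) / (p - v) \<le> (V q - V v) / (q - v)"
    using convex_on_slope_le(2)[OF cv, of p v q] assms by simp
  have 3: "(V q - V v) / (q - v) \<le> (V u - V v) / (u - v)"
  proof (cases "q = u")
    case False
    then show ?thesis using convex_on_slope_le(2)[OF cv, of q v u] assms by simp
  qed simp
  have e1: "(V q - V p) / (q - p) = (V p - V q) / (p - q)"
    by (metis minus_diff_eq minus_divide_divide)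
  have e2: "(V v - V u) / (v - u) = (V u - V v) / (u - v)"
    by (metis minus_diff_eq minus_divide_divide)
  show ?thesis using 1 2 3 e1 e2 by linarith
qed

lemma pos_Icc:
  fixes V :: "real \<Rightarrow> real"
  assumes cv: "convex_on UNIV V" and int: "integrable lborel (\<lambda>x. exp (- V x))" and "a < b"
  shows "0 < integral\<^sup>L lborel (\<lambda>t. indicator {a..b} t * exp (- V t))"
proof -
  have "(b - a) * exp (- max (V a) (V b)) \<le> integral\<^sup>L lborel (\<lambda>t. indicator {a..b} t * exp (- V t))"
  proof (rule Icc_lower[OF int])
    fix t assume "t \<in> {a..b}"
    then have "V t \<le> max (V a) (V b)"
      using convex_on_le_max[OF convex_on_subset[OF cv], of a b t] by auto
    then show "exp (- max (V a) (V b)) \<le> exp (- V t)" by simp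
  qed (use assms in auto)
  moreover have "0 < (b - a) * exp (- max (V a) (V b))" using assms by simp
  ultimately show ?thesis by linarith
qed

lemma F_pos:
  fixes V :: "real \<Rightarrow> real"
  assumes cv: "convex_on UNIV V" and int: "integrable lborel (\<lambda>x. exp (- V x))"
  shows "0 < Fm (\<lambda>x. exp (- V x)) y"
proof -
  have "integral\<^sup>L lborel (\<lambda>t. indicator {y-1..y} t * exp (- V t)) \<le> Fm (\<lambda>x. exp (- V x)) y"
    unfolding Fm_def by (rule sub_mono[OF int]) auto
  then show ?thesis using pos_Icc[OF cv int, of "y-1" y] by simp
qed

lemma G_pos:
  fixes V :: "real \<Rightarrow> real"
  assumes cv: "convex_on UNIV V" and int: "integrable lborel (\<lambda>x. exp (- V x))"
  shows "0 < Gm (\<lambda>x. exp (- V x)) y"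
proof -
  have "integral\<^sup>L lborel (\<lambda>t. indicator {y+1..y+2} t * exp (- V t)) \<le> Gm (\<lambda>x. exp (- V x)) y"
    unfolding Gm_def by (rule sub_mono[OF int]) auto
  then show ?thesis using pos_Icc[OF cv int, of "y+1" "y+2"] by simp
qed

lemma exR:
  fixes V :: "real \<Rightarrow> real"
  assumes int: "integrable lborel (\<lambda>x. exp (- V x))" and tot: "integral\<^sup>L lborel (\<lambda>x. exp (- V x)) = 1"
  shows "\<exists>R>0. V 0 < V R"
proof (rule ccontr)
  assume "\<not> ?thesis"
  then have h: "\<And>t. 0 < t \<Longrightarrow> V t \<le> V 0" by force
  define n where "n = exp (V 0) + 1"
  have "(n - 0) * exp (- V 0) \<le> integral\<^sup>L lborel (\<lambda>t. indicator {0..n} t * exp (- V t))"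
  proof (rule Icc_lower[OF int])
    fix t assume "t \<in> {0..n}"
    then show "exp (- V 0) \<le> exp (- V t)" using h[of t] by (cases "t = 0") auto
  qed (simp add: n_def add_nonneg_pos)
  also have "\<dots> \<le> 1" using sub_le_total[OF int, of "{0..n}"] tot by simp
  finally have "n * exp (- V 0) \<le> 1" by simp
  moreover have "n * exp (- V 0) = 1 + exp (- V 0)"
    unfolding n_def by (simp add: distrib_right exp_minus field_simps)
  ultimately show False by (smt (verit) exp_gt_zero)
qed

lemma exL:
  fixes V :: "real \<Rightarrow> real"
  assumes int: "integrable lborel (\<lambda>x. exp (- V x))" and tot: "integral\<^sup>L lborel (\<lambda>x. exp (- V x)) = 1"
  shows "\<exists>L<0. V 0 < V L"
proof (rule ccontr)
  assume "\<not> ?thesis"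
  then have h: "\<And>t. t < 0 \<Longrightarrow> V t \<le> V 0" by force
  define n where "n = exp (V 0) + 1"
  have "(0 - (-n)) * exp (- V 0) \<le> integral\<^sup>L lborel (\<lambda>t. indicator {-n..0} t * exp (- V t))"
  proof (rule Icc_lower[OF int])
    fix t assume "t \<in> {-n..0}"
    then show "exp (- V 0) \<le> exp (- V t)" using h[of t] by (cases "t = 0") auto
  qed (simp add: n_def add_nonneg_pos, smt (verit) exp_gt_zero)
  also have "\<dots> \<le> 1" using sub_le_total[OF int, of "{-n..0}"] tot by simp
  finally have "n * exp (- V 0) \<le> 1" by simp
  moreover have "n * exp (- V 0) = 1 + exp (- V 0)"
    unfolding n_def by (simp add: distrib_right exp_minus field_simps)
  ultimately show False by (smt (verit) exp_gt_zero)
qed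

lemma core:
  fixes V :: "real \<Rightarrow> real" and K :: real
  assumes cv: "convex_on UNIV V" and int: "integrable lborel (\<lambda>x. exp (- V x))"
    and tot: "integral\<^sup>L lborel (\<lambda>x. exp (- V x)) = 1" and K: "1 < K"
  shows "\<exists>A. \<forall>y x. y < x \<longrightarrow> A \<le> x - y \<longrightarrow>
     K * Fm (\<lambda>x. exp (- V x)) y < Fm (\<lambda>x. exp (- V x)) x \<or>
     K * Gm (\<lambda>x. exp (- V x)) x < Gm (\<lambda>x. exp (- V x)) y"
proof -
  let ?m = "\<lambda>x. exp (- V x)"
  have mnn: "\<And>t. 0 \<le> ?m t" by simp
  obtain R where R: "0 < R" "V 0 < V R" using exR[OF int tot] by blast
  obtain L where L: "L < 0" "V 0 < V L" using exL[OF int tot] by blast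
  define a where "a = (V R - V 0) / R"
  define a' where "a' = (V L - V 0) / (- L)"
  have a: "0 < a" using R unfolding a_def by simp
  have a': "0 < a'" using L unfolding a'_def by (intro divide_pos_pos) auto
  define k where "k = ln K"
  have k: "0 < k" using K unfolding k_def by simp
  define M where "M = max (V L) (V R)"
  define A where "A = max (k / a) (max (k / a') (exp (M + k))) + 1"
  show ?thesis
  proof (intro exI allI impI)
    fix y x :: real
    assume yx: "y < x" and Axy: "A \<le> x - y"
    show "K * Fm ?m y < Fm ?m x \<or> K * Gm ?m x < Gm ?m y"
    proof (rule ccontr)
      assume "\<not> ?thesis"
      then have hF: "Fm ?m x \<le> K * Fm ?m y" and hG: "Gm ?m y \<le> K * Gm ?m x" by auto
      have Fy: "0 < Fm ?m y" by (rule F_pos[OF cv int])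
      have Gx: "0 < Gm ?m x" by (rule G_pos[OF cv int])
      have w1: "V y - V w \<le> k" if "y \<le> w" "w \<le> x" for w
      proof -
        have "exp (V y - V w) * Fm ?m y \<le> Fm ?m w" by (rule shiftF[OF cv int that(1)])
        also have "\<dots> \<le> Fm ?m x" by (rule F_mono[OF int mnn that(2)])
        also have "\<dots> \<le> K * Fm ?m y" by (rule hF)
        finally have "exp (V y - V w) \<le> K" using Fy by simp
        then have "ln (exp (V y - V w)) \<le> ln K" using K by (subst ln_le_cancel_iff) auto
        then show ?thesis unfolding k_def by simp
      qed
      have w2: "V x - V w \<le> k" if "y \<le> w" "w \<le> x" for w
      proof -
        have "exp (V x - V w) * Gm ?m x \<le> Gm ?m w" by (rule shiftG[OF cv int that(2)])
        also have "\<dots> \<le> Gm ?m y" by (rule G_anti[OF int mnn that(1)])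
        also have "\<dots> \<le> K * Gm ?m x" by (rule hG)
        finally have "exp (V x - V w) \<le> K" using Gx by simp
        then have "ln (exp (V x - V w)) \<le> ln K" using K by (subst ln_le_cancel_iff) auto
        then show ?thesis unfolding k_def by simp
      qed
      have A1: "k / a < x - y" "k / a' < x - y" "exp (M + k) < x - y"
        using Axy unfolding A_def by linarith+
      consider "R \<le> y" | "x \<le> L" | "y < R" "L < x" by linarith
      then show False
      proof cases
        case 1
        have "a \<le> (V x - V y) / (x - y)"
          unfolding a_def using slope_mono[OF cv, of 0 R y x] R 1 yx by simp
        then have "a * (x - y) \<le> V x - V y" using yx by (simp add: le_divide_eq)
        also have "\<dots> \<le> k" using w2[of y] yx by simp
        finally have "x - y \<le> k / a" using a by (simp add: le_divide_eq mult.commute)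
        then show False using A1 by simp
      next
        case 2
        have "(V x - V y) / (x - y) \<le> (V 0 - V L) / (0 - L)"
          using slope_mono[OF cv, of y x L 0] L 2 yx by simp
        also have "\<dots> = - a'" using L unfolding a'_def by (auto simp: field_simps)
        finally have "a' * (x - y) \<le> V y - V x" using yx by (simp add: divide_le_eq)
        also have "\<dots> \<le> k" using w1[of x] yx by simp
        finally have "x - y \<le> k / a'" using a' by (simp add: le_divide_eq mult.commute)
        then show False using A1 by simp
      next
        case 3
        define w where "w = max y L"
        have wi: "y \<le> w" "w \<le> x" "L \<le> w" "w \<le> R" using 3 yx L R unfolding w_def by auto
        have VwM: "V w \<le> M"
          using convex_on_le_max[OF convex_on_subset[OF cv], of L R w] wi unfolding M_def by auto
        have "(x - y) * exp (- (M + k)) \<le> integral\<^sup>L lborel (\<lambda>t. indicator {y..x} t * ?m t)"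
        proof (rule Icc_lower[OF int])
          fix t assume t: "t \<in> {y..x}"
          have "V t \<le> max (V y) (V x)"
            using convex_on_le_max[OF convex_on_subset[OF cv], of y x t] t by auto
          also have "\<dots> \<le> V w + k" using w1[OF wi(1,2)] w2[OF wi(1,2)] by simp
          also have "\<dots> \<le> M + k" using VwM by simp
          finally show "exp (- (M + k)) \<le> ?m t" by simp
        qed (use yx in auto)
        also have "\<dots> \<le> 1" using sub_le_total[OF int mnn, of "{y..x}"] tot by simp
        finally have "(x - y) * exp (- (M + k)) \<le> 1" .
        moreover have "(x - y) * exp (- (M + k)) = (x - y) / exp (M + k)"
          by (simp only: exp_minus divide_inverse)
        ultimately have "x - y \<le> exp (M + k)" by (simp add: pos_divide_le_eq)
        then show False using A1 by simp
      qed
    qed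
  qed
qed

lemma cmp:
  fixes g h :: "real \<Rightarrow> real"
  assumes "integrable lborel g" "integrable lborel h" "\<And>t. a * g t \<le> h t" "S \<in> sets borel"
  shows "a * integral\<^sup>L lborel (\<lambda>t. indicator S t * g t) \<le> integral\<^sup>L lborel (\<lambda>t. indicator S t * h t)"
proof -
  have "a * integral\<^sup>L lborel (\<lambda>t. indicator S t * g t) = integral\<^sup>L lborel (\<lambda>t. a * (indicator S t * g t))"
    by simp
  also have "\<dots> \<le> integral\<^sup>L lborel (\<lambda>t. indicator S t * h t)"
    by (rule integral_mono) (use assms in \<open>auto intro!: ind_int Bochner_Integration.integrable_mult_right split: split_indicator\<close>)
  finally show ?thesis .
qed

theorem lemma2p7:
  fixes V :: "real \<Rightarrow> real" and c C :: real
  assumes "convex_on UNIV V"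
    and "prob_density (\<lambda>x. exp (- V x))"
    and "0 < c" and "c < C"
  shows "\<exists>A. \<forall>f \<in> P_cC c C (\<lambda>x. exp (- V x)).
           \<forall>x. \<bar>ot_map (\<lambda>x. exp (- V x)) f x - x\<bar> \<le> A"
proof -
  let ?m = "\<lambda>x. exp (- V x)"
  have cv: "convex_on UNIV V" using assms(1) .
  have int: "integrable lborel ?m" and tot: "integral\<^sup>L lborel ?m = 1"
    using assms(2) unfolding prob_density_def by auto
  define K where "K = max C (1 / c) + 1"
  have K1: "1 < K" using assms(3,4) unfolding K_def by (auto simp: max_def field_simps)
  have KC: "C \<le> K" unfolding K_def by simp
  have cK: "1 \<le> c * K"
  proof -
    have "1 / c \<le> K" unfolding K_def by simp
    then show ?thesis using assms(3) by (simp add: divide_le_eq mult.commute)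
  qed
  obtain A where A: "\<And>y x. y < x \<Longrightarrow> A \<le> x - y \<Longrightarrow>
     K * Fm ?m y < Fm ?m x \<or> K * Gm ?m x < Gm ?m y"
    using core[OF cv int tot K1] by blast
  define A0 where "A0 = max A 1"
  have A0: "\<And>y x. y < x \<Longrightarrow> A0 \<le> x - y \<Longrightarrow>
     K * Fm ?m y < Fm ?m x \<or> K * Gm ?m x < Gm ?m y"
    using A unfolding A0_def by auto
  have A0p: "0 < A0" unfolding A0_def by simp
  have Fmnn: "0 \<le> Fm ?m z" for z unfolding Fm_def by (rule Bochner_Integration.integral_nonneg) (auto split: split_indicator)
  have Gmnn: "0 \<le> Gm ?m z" for z unfolding Gm_def by (rule Bochner_Integration.integral_nonneg) (auto split: split_indicator)
  show ?thesis
  proof (intro exI ballI allI)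
    fix f x assume "f \<in> P_cC c C ?m"
    then have pd: "prob_density f" and fb: "\<And>x. c * ?m x \<le> f x" "\<And>x. f x \<le> C * ?m x"
      unfolding P_cC_def by auto
    have fint: "integrable lborel f" and ftot: "integral\<^sup>L lborel f = 1"
      using pd unfolding prob_density_def by auto
    have Ff_up: "Fm f z \<le> C * Fm ?m z" for z
    proof -
      have "1 * integral\<^sup>L lborel (\<lambda>t. indicator {..z} t * f t) \<le> integral\<^sup>L lborel (\<lambda>t. indicator {..z} t * (C * ?m t))"
        by (rule cmp) (use fb int fint in \<open>auto intro: Bochner_Integration.integrable_mult_right\<close>)
      also have "(\<lambda>t. indicator {..z} t * (C * ?m t)) = (\<lambda>t. C * (indicator {..z} t * ?m t))"
        by (simp add: fun_eq_iff mult.left_commute)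
      finally show ?thesis unfolding Fm_def by simp
    qed
    have Ff_lo: "c * Fm ?m z \<le> Fm f z" for z
      unfolding Fm_def using cmp[OF int fint, of c "{..z}"] fb by simp
    have Gf_up: "Gm f z \<le> C * Gm ?m z" for z
    proof -
      have "1 * integral\<^sup>L lborel (\<lambda>t. indicator {z<..} t * f t) \<le> integral\<^sup>L lborel (\<lambda>t. indicator {z<..} t * (C * ?m t))"
        by (rule cmp) (use fb int fint in \<open>auto intro: Bochner_Integration.integrable_mult_right\<close>)
      also have "(\<lambda>t. indicator {z<..} t * (C * ?m t)) = (\<lambda>t. C * (indicator {z<..} t * ?m t))"
        by (simp add: fun_eq_iff mult.left_commute)
      finally show ?thesis unfolding Gm_def by simp
    qed
    have Gf_lo: "c * Gm ?m z \<le> Gm f z" for z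
      unfolding Gm_def using cmp[OF int fint, of c "{z<..}"] fb by simp
    have sf: "Fm f z + Gm f z = 1" for z using FG_sum[OF fint] ftot by simp
    have sm: "Fm ?m z + Gm ?m z = 1" for z using FG_sum[OF int] tot by simp
    define p where "p = Fm ?m x"
    define S where "S = {y. p \<le> cdf f y}"
    have S_eq: "S = {y. p \<le> Fm f y}" unfolding S_def cdf_Fm ..
    have T: "ot_map ?m f x = Inf S" unfolding ot_map_def quantile_def S_def p_def by (simp add: cdf_Fm)
    have inS: "x + A0 \<in> S"
    proof -
      have "K * Fm ?m x < Fm ?m (x + A0) \<or> K * Gm ?m (x + A0) < Gm ?m x"
        using A0[of x "x + A0"] A0p by simp
      then have "p \<le> Fm f (x + A0)"
      proof
        assume h: "K * Fm ?m x < Fm ?m (x + A0)"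
        have "p \<le> c * K * Fm ?m x" unfolding p_def using cK Fmnn[of x] by (simp add: mult_le_cancel_right1)
        also have "\<dots> \<le> c * Fm ?m (x + A0)" using h assms(3) by (simp add: mult.assoc)
        also have "\<dots> \<le> Fm f (x + A0)" by (rule Ff_lo)
        finally show ?thesis .
      next
        assume h: "K * Gm ?m (x + A0) < Gm ?m x"
        have "C * Gm ?m (x + A0) \<le> K * Gm ?m (x + A0)" using KC Gmnn by (simp add: mult_right_mono)
        then have "Gm f (x + A0) \<le> Gm ?m x" using Gf_up[of "x + A0"] h by linarith
        then show ?thesis unfolding p_def using sf[of "x + A0"] sm[of x] by linarith
      qed
      then show ?thesis unfolding S_eq by simp
    qed
    have lb: "x - A0 \<le> z" if "z \<in> S" for z
    proof (rule ccontr)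
      assume "\<not> x - A0 \<le> z"
      then have zx: "z < x" "A0 \<le> x - z" using A0p by auto
      have pz: "p \<le> Fm f z" using that unfolding S_eq by simp
      from A0[OF zx] show False
      proof
        assume h: "K * Fm ?m z < Fm ?m x"
        have "C * Fm ?m z \<le> K * Fm ?m z" using KC Fmnn by (simp add: mult_right_mono)
        then show False using Ff_up[of z] h pz unfolding p_def by linarith
      next
        assume h: "K * Gm ?m x < Gm ?m z"
        have "Gm ?m x \<le> c * K * Gm ?m x" using cK Gmnn[of x] by (simp add: mult_le_cancel_right1)
        also have "\<dots> < c * Gm ?m z" using h assms(3) by (simp add: mult.assoc)
        also have "\<dots> \<le> Gm f z" by (rule Gf_lo)
        finally show False using pz sf[of z] sm[of x] unfolding p_def by linarith
      qed
    qed
    have "Inf S \<le> x + A0" by (rule cInf_lower[OF inS]) (use lb in \<open>auto simp: bdd_below_def\<close>)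
    moreover have "x - A0 \<le> Inf S" by (rule cInf_greatest) (use inS lb in auto)
    ultimately show "\<bar>ot_map ?m f x - x\<bar> \<le> A0" unfolding T by simp
  qed
qed

end
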